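(* Let $Z,V,Y$ be random variables and $f:\mathbb{R}\times\mathcal{V}\to\mathbb{R}$ a measurable function such that: (i) $f(z,v)$ is non-increasing in $z$ for every $v$; (ii) $Z$ and $V$ are conditionally independent given $Y$; (iii) $\mathbb{E}(Z\mid Y)=\mathbb{E}(Z)$ almost surely. Assume $Z$, $f(Z,V)$, $Zf(Z,V)$ and $f(\mathbb{E}Z,V)$ are integrable (and $Zf(\mathbb{E}Z,V)$ integrable). Then $$\mathbb{E}[Z f(Z,V)]\le \mathbb{E}(Z)\,\mathbb{E}[f(Z,V)].$$ *)

theory Defs
  imports "HOL-Probability.Probability"
begin

definition cond_indep_given ::
  "'a measure \<Rightarrow> 'x measure \<Rightarrow> 'w measure \<Rightarrow> 'y measure \<Rightarrow>
   ('a \<Rightarrow> 'x) \<Rightarrow> ('a \<Rightarrow> 'w) \<Rightarrow> ('a \<Rightarrow> 'y) \<Rightarrow> bool" where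
  "cond_indep_given M MX MW MY X W Y \<longleftrightarrow>
    (\<forall>A\<in>sets MX. \<forall>B\<in>sets MW.
       AE x in M.
         real_cond_exp M (vimage_algebra (space M) Y MY)
           (\<lambda>\<omega>. indicator A (X \<omega>) * indicator B (W \<omega>)) x
       = real_cond_exp M (vimage_algebra (space M) Y MY) (\<lambda>\<omega>. indicator A (X \<omega>)) x *
         real_cond_exp M (vimage_algebra (space M) Y MY) (\<lambda>\<omega>. indicator B (W \<omega>)) x)"

end

theory Submission imports Defs begin

lemma dens_eq:
  fixes g1 g2 :: "'a \<Rightarrow> real" and T :: "'a \<Rightarrow> 'b" and \<phi> :: "'b \<Rightarrow> real"
  assumes [measurable]: "g1 \<in> borel_measurable M" "g2 \<in> borel_measurable M" "T \<in> measurable M S" "\<phi> \<in> borel_measurable S"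
  and n1: "AE x in M. 0 \<le> g1 x" and n2: "AE x in M. 0 \<le> g2 x"
  and int1: "\<And>A. A \<in> sets S \<Longrightarrow> integrable M (\<lambda>x. g1 x * indicator A (T x))"
  and int2: "\<And>A. A \<in> sets S \<Longrightarrow> integrable M (\<lambda>x. g2 x * indicator A (T x))"
  and eq: "\<And>A. A \<in> sets S \<Longrightarrow> (\<integral>x. g1 x * indicator A (T x) \<partial>M) = (\<integral>x. g2 x * indicator A (T x) \<partial>M)"
  shows "(\<integral>x. g1 x * \<phi> (T x) \<partial>M) = (\<integral>x. g2 x * \<phi> (T x) \<partial>M)"
proof -
  have em: "emeasure (distr (density M g) S T) A = ennreal (\<integral>x. g x * indicator A (T x) \<partial>M)"
    if A: "A \<in> sets S" and g: "g \<in> borel_measurable M" "AE x in M. 0 \<le> g x"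
      "integrable M (\<lambda>x. g x * indicator A (T x))" for g A
  proof -
    have "emeasure (distr (density M g) S T) A = emeasure (density M g) (T -` A \<inter> space M)"
      by (subst emeasure_distr) (auto simp: A)
    also have "\<dots> = (\<integral>\<^sup>+x. ennreal (g x) * indicator (T -` A \<inter> space M) x \<partial>M)"
      by (rule emeasure_density) (use A g in auto)
    also have "\<dots> = (\<integral>\<^sup>+x. ennreal (g x * indicator A (T x)) \<partial>M)"
      by (rule nn_integral_cong) (auto simp: indicator_def)
    also have "\<dots> = ennreal (\<integral>x. g x * indicator A (T x) \<partial>M)"
      by (rule nn_integral_eq_integral) (use g in \<open>auto simp: indicator_def\<close>)
    finally show ?thesis .
  qed
  have D: "distr (density M g1) S T = distr (density M g2) S T"
    by (rule measure_eqI) (auto simp: em n1 n2 int1 int2 eq)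
  then have "integral\<^sup>L (distr (density M g1) S T) \<phi> = integral\<^sup>L (distr (density M g2) S T) \<phi>" by simp
  then show ?thesis using n1 n2 by (simp add: integral_distr integral_density)
qed

lemma int_bdd:
  fixes g c :: "'a \<Rightarrow> real"
  assumes "integrable M g" "c \<in> borel_measurable M" "AE x in M. \<bar>c x\<bar> \<le> 1"
  shows "integrable M (\<lambda>x. g x * c x)"
proof (rule Bochner_Integration.integrable_bound[OF assms(1)])
  show "(\<lambda>x. g x * c x) \<in> borel_measurable M" using assms borel_measurable_integrable by measurable
  show "AE x in M. norm (g x * c x) \<le> norm (g x)"
    using assms(3) by eventually_elim (auto simp: abs_mult intro: mult_left_le)
qed

theorem mainTheorem7:
  fixes M :: "'a measure" and N :: "'v measure" and K :: "'y measure"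
    and Z :: "'a \<Rightarrow> real" and V :: "'a \<Rightarrow> 'v" and Y :: "'a \<Rightarrow> 'y"
    and f :: "real \<Rightarrow> 'v \<Rightarrow> real"
  assumes P: "prob_space M"
    and Zm: "Z \<in> borel_measurable M"
    and Vm: "V \<in> measurable M N"
    and Ym: "Y \<in> measurable M K"
    and fm: "(\<lambda>(z, v). f z v) \<in> borel_measurable (borel \<Otimes>\<^sub>M N)"
    and mono: "\<And>v. v \<in> space N \<Longrightarrow> antimono (\<lambda>z. f z v)"
    and ci: "cond_indep_given M borel N K Z V Y"
    and ce: "AE x in M. real_cond_exp M (vimage_algebra (space M) Y K) Z x = integral\<^sup>L M Z"
    and i1: "integrable M Z"
    and i2: "integrable M (\<lambda>x. f (Z x) (V x))"
    and i3: "integrable M (\<lambda>x. Z x * f (Z x) (V x))"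
    and i4: "integrable M (\<lambda>x. f (integral\<^sup>L M Z) (V x))"
    and i5: "integrable M (\<lambda>x. Z x * f (integral\<^sup>L M Z) (V x))"
  shows "integral\<^sup>L M (\<lambda>x. Z x * f (Z x) (V x))
           \<le> integral\<^sup>L M Z * integral\<^sup>L M (\<lambda>x. f (Z x) (V x))"
proof -
  interpret prob_space M by (rule P)
  define F where "F = vimage_algebra (space M) Y K"
  define m where "m = integral\<^sup>L M Z"
  have subF: "subalgebra M F"
    unfolding subalgebra_def F_def using Ym by (auto simp: measurable_iff_sets)
  interpret FS: finite_measure_subalgebra M F
    by unfold_locales (rule subF)
  note [measurable] = Zm Vm
  have ind_meas[measurable]: "(\<lambda>x. indicator B (V x) :: real) \<in> borel_measurable M" if "B \<in> sets N" for B
    using that by measurable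
  have ind_measZ[measurable]: "(\<lambda>x. indicator A (Z x) :: real) \<in> borel_measurable M" if "A \<in> sets borel" for A
    using that by measurable
  have ind_bd: "AE x in M. \<bar>indicator B (V x) :: real\<bar> \<le> 1" for B
    by (rule AE_I2) (simp add: indicator_def)
  have ind_bdZ: "AE x in M. \<bar>indicator A (Z x) :: real\<bar> \<le> 1" for A
    by (rule AE_I2) (simp add: indicator_def)
  have ind_int: "integrable M (\<lambda>x. indicator B (V x) :: real)" if "B \<in> sets N" for B
    using int_bdd[OF integrable_const[of 1] ind_meas[OF that] ind_bd] by simp
  have ind_intZ: "integrable M (\<lambda>x. indicator A (Z x) :: real)" if "A \<in> sets borel" for A
    using int_bdd[OF integrable_const[of 1] ind_measZ[OF that] ind_bdZ] by simp
  have step1: "(\<integral>x. indicator B (V x) * Z x \<partial>M) = m * (\<integral>x. indicator B (V x) \<partial>M)"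
    if B: "B \<in> sets N" for B
  proof -
    define b where "b = real_cond_exp M F (\<lambda>x. indicator B (V x))"
    have bm[measurable]: "b \<in> borel_measurable M" "b \<in> borel_measurable F" unfolding b_def by simp_all
    have b0: "AE x in M. 0 \<le> b x" unfolding b_def
      by (rule FS.real_cond_exp_pos[OF _ ind_meas[OF B]]) (rule AE_I2, simp)
    have b1: "AE x in M. b x \<le> 1" unfolding b_def
      by (rule FS.real_cond_exp_le_c[OF ind_int[OF B]]) (rule AE_I2, simp add: indicator_def)
    have bint: "integrable M b" unfolding b_def using FS.real_cond_exp_int(1)[OF ind_int[OF B]] .
    have babs: "AE x in M. \<bar>b x\<bar> \<le> 1" using b0 b1 by eventually_elim simp
    have eqA: "(\<integral>x. indicator B (V x) * indicator A (Z x) \<partial>M) = (\<integral>x. b x * indicator A (Z x) \<partial>M)"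
      if A: "A \<in> sets borel" for A
    proof -
      have "(\<integral>x. b x * indicator A (Z x) \<partial>M) = (\<integral>x. b x * real_cond_exp M F (\<lambda>x. indicator A (Z x)) x \<partial>M)"
        by (rule FS.real_cond_exp_intg(2)[symmetric, OF int_bdd[OF bint ind_measZ[OF A] ind_bdZ] bm(2) ind_measZ[OF A]])
      also have "\<dots> = (\<integral>x. real_cond_exp M F (\<lambda>x. indicator A (Z x) * indicator B (V x)) x \<partial>M)"
      proof (rule integral_cong_AE)
        have "AE x in M. real_cond_exp M F (\<lambda>x. indicator A (Z x) * indicator B (V x)) x =
            real_cond_exp M F (\<lambda>x. indicator A (Z x)) x * b x"
          using ci A B unfolding cond_indep_given_def F_def b_def by blast
        then show "AE x in M. b x * real_cond_exp M F (\<lambda>x. indicator A (Z x)) x =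
            real_cond_exp M F (\<lambda>x. indicator A (Z x) * indicator B (V x)) x"
          by eventually_elim simp
      qed simp_all
      also have "\<dots> = (\<integral>x. indicator A (Z x) * indicator B (V x) \<partial>M)"
        by (rule FS.real_cond_exp_int(2)[OF int_bdd[OF ind_intZ[OF A] ind_meas[OF B] ind_bd]])
      finally show ?thesis by (simp add: mult.commute)
    qed
    have "(\<integral>x. indicator B (V x) * id (Z x) \<partial>M) = (\<integral>x. b x * id (Z x) \<partial>M)"
    proof (rule dens_eq[where S=borel and T=Z and \<phi>=id])
      show "AE x in M. 0 \<le> (indicator B (V x) :: real)" by (rule AE_I2) simp
      show "integrable M (\<lambda>x. indicator B (V x) * indicator A (Z x) :: real)" if "A \<in> sets borel" for A
        by (rule int_bdd[OF ind_int[OF B] ind_measZ[OF that] ind_bdZ])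
      show "integrable M (\<lambda>x. b x * indicator A (Z x))" if "A \<in> sets borel" for A
        by (rule int_bdd[OF bint ind_measZ[OF that] ind_bdZ])
    qed (simp_all add: b0 eqA B ind_meas)
    then have "(\<integral>x. indicator B (V x) * Z x \<partial>M) = (\<integral>x. b x * Z x \<partial>M)" by simp
    also have "\<dots> = (\<integral>x. b x * real_cond_exp M F Z x \<partial>M)"
      by (rule FS.real_cond_exp_intg(2)[symmetric])
        (use int_bdd[OF i1 bm(1) babs] in \<open>simp_all add: mult.commute\<close>)
    also have "\<dots> = (\<integral>x. b x * m \<partial>M)"
    proof (rule integral_cong_AE)
      show "AE x in M. b x * real_cond_exp M F Z x = b x * m"
        using ce unfolding F_def m_def by eventually_elim simp
    qed simp_all
    also have "\<dots> = m * (\<integral>x. indicator B (V x) \<partial>M)"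
      using FS.real_cond_exp_int(2)[OF ind_int[OF B]] by (simp add: b_def mult.commute)
    finally show ?thesis .
  qed
  define h where "h = (\<lambda>v. f m v)"
  have hm[measurable]: "h \<in> borel_measurable N"
    using measurable_compose[OF measurable_Pair1'[of m borel N] fm] by (simp add: h_def)
  have hVm[measurable]: "(\<lambda>x. h (V x)) \<in> borel_measurable M"
    using measurable_compose[OF Vm hm] by simp
  have fZm[measurable]: "(\<lambda>x. f (Z x) (V x)) \<in> borel_measurable M"
    using measurable_compose[OF measurable_Pair[OF Zm Vm] fm] by simp
  have i4': "integrable M (\<lambda>x. h (V x))" using i4 by (simp add: h_def m_def)
  have i5': "integrable M (\<lambda>x. Z x * h (V x))" using i5 by (simp add: h_def m_def)
  define mp where "mp = max m 0"
  define mn where "mn = max (- m) 0"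
  have mn0: "0 \<le> mn" and mp0: "0 \<le> mp" and mpn: "mp - mn = m" unfolding mp_def mn_def by auto
  define g1 where "g1 = (\<lambda>x. max (Z x) 0 + mn)"
  define g2 where "g2 = (\<lambda>x. max (- Z x) 0 + mp)"
  have g1m[measurable]: "g1 \<in> borel_measurable M" unfolding g1_def by measurable
  have g2m[measurable]: "g2 \<in> borel_measurable M" unfolding g2_def by measurable
  have g1i: "integrable M g1" unfolding g1_def
    using i1 by simp
  have g2i: "integrable M g2" unfolding g2_def
    using i1 by simp
  have g12: "g1 x = g2 x + Z x - m" for x unfolding g1_def g2_def using mpn by auto
  have gbound: "integrable M (\<lambda>x. g x * h (V x))"
    if gm: "g \<in> borel_measurable M" and gb: "\<And>x. \<bar>g x\<bar> \<le> \<bar>Z x\<bar> + mp + mn" for g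
  proof (rule Bochner_Integration.integrable_bound)
    show "integrable M (\<lambda>x. \<bar>Z x * h (V x)\<bar> + (mp + mn) * \<bar>h (V x)\<bar>)"
      using i5' i4' by simp
    show "(\<lambda>x. g x * h (V x)) \<in> borel_measurable M" using gm by measurable
    show "AE x in M. norm (g x * h (V x)) \<le> norm (\<bar>Z x * h (V x)\<bar> + (mp + mn) * \<bar>h (V x)\<bar>)"
    proof (rule AE_I2)
      fix x
      have "\<bar>g x * h (V x)\<bar> = \<bar>g x\<bar> * \<bar>h (V x)\<bar>" by (simp add: abs_mult)
      also have "\<dots> \<le> (\<bar>Z x\<bar> + mp + mn) * \<bar>h (V x)\<bar>" by (rule mult_right_mono[OF gb]) simp
      also have "\<dots> = \<bar>Z x * h (V x)\<bar> + (mp + mn) * \<bar>h (V x)\<bar>" by (simp add: abs_mult algebra_simps)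
      finally show "norm (g x * h (V x)) \<le> norm (\<bar>Z x * h (V x)\<bar> + (mp + mn) * \<bar>h (V x)\<bar>)"
        using mn0 mp0 by simp
    qed
  qed
  have g1hi: "integrable M (\<lambda>x. g1 x * h (V x))"
    by (rule gbound[OF g1m]) (use mn0 mp0 in \<open>auto simp: g1_def abs_if\<close>)
  have g2hi: "integrable M (\<lambda>x. g2 x * h (V x))"
    by (rule gbound[OF g2m]) (use mn0 mp0 in \<open>auto simp: g2_def abs_if\<close>)
  have step2: "(\<integral>x. g1 x * h (V x) \<partial>M) = (\<integral>x. g2 x * h (V x) \<partial>M)"
  proof (rule dens_eq[where S=N and T=V and \<phi>=h])
    show "AE x in M. 0 \<le> g1 x" by (rule AE_I2) (simp add: g1_def mn0)
    show "AE x in M. 0 \<le> g2 x" by (rule AE_I2) (simp add: g2_def mp0)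
    show i1B: "integrable M (\<lambda>x. g1 x * indicator B (V x))" if "B \<in> sets N" for B
      by (rule int_bdd[OF g1i ind_meas[OF that] ind_bd])
    show i2B: "integrable M (\<lambda>x. g2 x * indicator B (V x))" if "B \<in> sets N" for B
      by (rule int_bdd[OF g2i ind_meas[OF that] ind_bd])
    show "(\<integral>x. g1 x * indicator B (V x) \<partial>M) = (\<integral>x. g2 x * indicator B (V x) \<partial>M)"
      if B: "B \<in> sets N" for B
    proof -
      have iZ: "integrable M (\<lambda>x. indicator B (V x) * Z x)"
        by (subst mult.commute) (rule int_bdd[OF i1 ind_meas[OF B] ind_bd])
      have im: "integrable M (\<lambda>x. m * indicator B (V x))"
        by (rule integrable_mult_right[OF ind_int[OF B]])
      have "(\<integral>x. g1 x * indicator B (V x) \<partial>M) =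
          (\<integral>x. g2 x * indicator B (V x) + (indicator B (V x) * Z x - m * indicator B (V x)) \<partial>M)"
        by (rule Bochner_Integration.integral_cong) (simp_all add: g12 algebra_simps)
      also have "\<dots> = (\<integral>x. g2 x * indicator B (V x) \<partial>M) +
          ((\<integral>x. indicator B (V x) * Z x \<partial>M) - (\<integral>x. m * indicator B (V x) \<partial>M))"
        using i2B[OF B] iZ im by simp
      also have "\<dots> = (\<integral>x. g2 x * indicator B (V x) \<partial>M)"
        using step1[OF B] by simp
      finally show ?thesis .
    qed
  qed (simp_all add: Vm)
  have key: "(\<integral>x. Z x * h (V x) \<partial>M) = m * (\<integral>x. h (V x) \<partial>M)"
  proof -
    have "(\<integral>x. Z x * h (V x) \<partial>M) = (\<integral>x. (g1 x * h (V x) - g2 x * h (V x)) + m * h (V x) \<partial>M)"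
      by (rule Bochner_Integration.integral_cong) (simp_all add: g12 algebra_simps)
    also have "\<dots> = ((\<integral>x. g1 x * h (V x) \<partial>M) - (\<integral>x. g2 x * h (V x) \<partial>M)) + m * (\<integral>x. h (V x) \<partial>M)"
      using g1hi g2hi i4' by simp
    finally show ?thesis using step2 by simp
  qed
  have pw: "Z x * f (Z x) (V x) \<le> m * f (Z x) (V x) + (Z x * h (V x) - m * h (V x))"
    if x: "x \<in> space M" for x
  proof -
    have am: "antimono (\<lambda>z. f z (V x))" using mono measurable_space[OF Vm x] by blast
    have "(Z x - m) * (f (Z x) (V x) - h (V x)) \<le> 0"
    proof (cases "Z x \<le> m")
      case True
      then have "f m (V x) \<le> f (Z x) (V x)" using antimonoD[OF am] by blast
      then show ?thesis using True by (intro mult_nonpos_nonneg) (auto simp: h_def)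
    next
      case False
      then have "f (Z x) (V x) \<le> f m (V x)" using antimonoD[OF am, of m "Z x"] by simp
      then show ?thesis using False by (intro mult_nonneg_nonpos) (auto simp: h_def)
    qed
    then show ?thesis by (simp add: algebra_simps)
  qed
  have "(\<integral>x. Z x * f (Z x) (V x) \<partial>M) \<le> (\<integral>x. m * f (Z x) (V x) + (Z x * h (V x) - m * h (V x)) \<partial>M)"
    by (rule integral_mono) (use i3 i2 i4' i5' pw in auto)
  also have "\<dots> = m * (\<integral>x. f (Z x) (V x) \<partial>M) + ((\<integral>x. Z x * h (V x) \<partial>M) - m * (\<integral>x. h (V x) \<partial>M))"
    using i2 i4' i5' by simp
  also have "\<dots> = m * (\<integral>x. f (Z x) (V x) \<partial>M)" using key by simp
  finally show ?thesis unfolding m_def .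
qed

end
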